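(* Let $\mathbf{M}$ be the $5\times4$ matrix of operators on $\ell_{2+}$ $$\mathbf{M}=\begin{bmatrix}-\mathbf{1}&\mathbf{0}&\mathbf{0}&\mathbf{0}\\ \tfrac{1}{\sqrt2}\mathfrak{q}^*&-\mathbf{1}&\mathbf{0}&\mathbf{0}\\ \mathbf{0}&\tfrac{1}{\sqrt2}\mathfrak{q}^*&\tfrac{1}{\sqrt2}\mathfrak{q}^*&\mathbf{0}\\ \mathbf{0}&\mathbf{0}&-\mathbf{1}&\tfrac{1}{\sqrt2}\mathfrak{q}^*\\ \mathbf{0}&\mathbf{0}&\mathbf{0}&-\mathbf{1}\end{bmatrix},$$ and let $\mathbf{P}$ be any $4\times4$ permutation matrix. Then there does not exist an invertible $4\times4$ matrix of operators $\mathbf{L}$ with entries in $\mathbb{R}[\mathfrak{q}]$ such that both of the following hold: 1) $\mathbf{L}\mathbf{L}^*=(\mathbf{M}\mathbf{P})^*\mathbf{M}\mathbf{P}$; 2) $\mathbf{L}$ is lower triangular and satisfies $[(\mathbf{M}\mathbf{P})^*\mathbf{M}\mathbf{P}]_{ij}=\mathbf{0}\implies\mathbf{L}_{ij}=\mathbf{0}$ for all $i,j$.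
   Context: $\ell_{2+}$ is the Hilbert space of square-summable real sequences $(y[0],y[1],\ldots)$; matrices of operators act on $\ell_{2+}^n$ in the usual way and $^*$ denotes the adjoint. The forward shift is $\mathfrak{q}:(y[0],y[1],\ldots)\mapsto(y[1],y[2],\ldots)$, with adjoint $\mathfrak{q}^*:(y[0],y[1],\ldots)\mapsto(0,y[0],y[1],\ldots)$. $\mathbf{1}$ is the identity and $\mathbf{0}$ the zero operator; real scalars act by scaling. $\mathbb{R}[\mathfrak{q}]=\{\sum_{j=0}^{N-1}\alpha_j\mathfrak{q}^j : N\in\mathbb{N},\ \alpha_j\in\mathbb{R}\}$ (the operators whose adjoints are polynomials in $\mathfrak{q}^*$). A permutation matrix of operators has exactly one nonzero entry in each row and column, and that entry equals $\mathbf{1}$. *)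

theory Defs
  imports Complex_Main
begin

type_synonym seq = "nat \<Rightarrow> real"
type_synonym op = "seq \<Rightarrow> seq"
type_synonym opmat = "nat \<Rightarrow> nat \<Rightarrow> op"

definition ell2 :: "seq set" where
  "ell2 = {y. summable (\<lambda>n. (y n)\<^sup>2)}"

definition ell2_inner :: "seq \<Rightarrow> seq \<Rightarrow> real" where
  "ell2_inner x y = (\<Sum>n. x n * y n)"

definition fshift :: op where
  "fshift y = (\<lambda>n. y (Suc n))"

definition bshift :: op where
  "bshift y = (\<lambda>n. case n of 0 \<Rightarrow> 0 | Suc m \<Rightarrow> y m)"

definition op_zero :: op where "op_zero y = (\<lambda>n. 0)"
definition op_one :: op where "op_one y = y"
definition op_negone :: op where "op_negone y = (\<lambda>n. - y n)"
definition op_scale :: "real \<Rightarrow> op \<Rightarrow> op" where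
  "op_scale c T y = (\<lambda>n. c * T y n)"

definition op_eq :: "op \<Rightarrow> op \<Rightarrow> bool" where
  "op_eq T S \<longleftrightarrow> (\<forall>y\<in>ell2. T y = S y)"

definition bounded_op :: "op \<Rightarrow> bool" where
  "bounded_op T \<longleftrightarrow> (\<forall>x\<in>ell2. T x \<in> ell2)
     \<and> (\<forall>x\<in>ell2. \<forall>y\<in>ell2. \<forall>a b. T (\<lambda>n. a * x n + b * y n) = (\<lambda>n. a * T x n + b * T y n))
     \<and> (\<exists>C. \<forall>x\<in>ell2. ell2_inner (T x) (T x) \<le> C * ell2_inner x x)"

definition adj :: "op \<Rightarrow> op" where
  "adj T = (THE S. (\<forall>y. y \<notin> ell2 \<longrightarrow> S y = (\<lambda>n. 0)) \<and> (\<forall>y\<in>ell2. S y \<in> ell2)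
      \<and> (\<forall>x\<in>ell2. \<forall>y\<in>ell2. ell2_inner (T x) y = ell2_inner x (S y)))"

definition mmul :: "nat \<Rightarrow> opmat \<Rightarrow> opmat \<Rightarrow> opmat" where
  "mmul k A B i j = (\<lambda>y n. \<Sum>l<k. A i l (B l j y) n)"

definition madj :: "opmat \<Rightarrow> opmat" where
  "madj A i j = adj (A j i)"

definition mat_eq :: "nat \<Rightarrow> nat \<Rightarrow> opmat \<Rightarrow> opmat \<Rightarrow> bool" where
  "mat_eq m n A B \<longleftrightarrow> (\<forall>i<m. \<forall>j<n. op_eq (A i j) (B i j))"

definition mat_id :: opmat where
  "mat_id i j = (if i = j then op_one else op_zero)"

definition invertible_opmat :: "nat \<Rightarrow> opmat \<Rightarrow> bool" where
  "invertible_opmat n L \<longleftrightarrow> (\<exists>K. (\<forall>i<n. \<forall>j<n. bounded_op (K i j))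
      \<and> mat_eq n n (mmul n L K) mat_id \<and> mat_eq n n (mmul n K L) mat_id)"

definition in_Rq :: "op \<Rightarrow> bool" where
  "in_Rq T \<longleftrightarrow> (\<exists>N a. T = (\<lambda>y n. \<Sum>k<N. a k * (fshift ^^ k) y n))"

definition perm_opmat :: "nat \<Rightarrow> opmat \<Rightarrow> bool" where
  "perm_opmat n P \<longleftrightarrow> (\<forall>i<n. \<forall>j<n. P i j = op_one \<or> P i j = op_zero)
     \<and> (\<forall>i<n. \<exists>!j. j < n \<and> P i j \<noteq> op_zero)
     \<and> (\<forall>j<n. \<exists>!i. i < n \<and> P i j \<noteq> op_zero)"

definition lower_tri :: "nat \<Rightarrow> opmat \<Rightarrow> bool" where
  "lower_tri n L \<longleftrightarrow> (\<forall>i<n. \<forall>j<n. i < j \<longrightarrow> op_eq (L i j) op_zero)"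

definition cq :: op where "cq = op_scale (1 / sqrt 2) bshift"

text \<open>The 5x4 matrix M (rows/columns indexed from 0).\<close>
definition Mmat :: opmat where
  "Mmat i j =
    [[op_negone, op_zero,   op_zero,   op_zero],
     [cq,        op_negone, op_zero,   op_zero],
     [op_zero,   cq,        cq,        op_zero],
     [op_zero,   op_zero,   op_negone, cq],
     [op_zero,   op_zero,   op_zero,   op_negone]] ! i ! j"

end

theory Submission
  imports Defs
begin

definition polyf :: "(nat \<Rightarrow> real) \<Rightarrow> nat \<Rightarrow> op" where
  "polyf a N = (\<lambda>y n. \<Sum>k<N. a k * (fshift ^^ k) y n)"
definition polyb :: "(nat \<Rightarrow> real) \<Rightarrow> nat \<Rightarrow> op" where
  "polyb a N = (\<lambda>y n. \<Sum>k<N. a k * (bshift ^^ k) y n)"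
definition dlt :: "nat \<Rightarrow> seq" where "dlt m = (\<lambda>n. if n = m then 1 else 0)"

lemma fshift_pow: "(fshift ^^ k) y n = y (n + k)"
  by (induction k arbitrary: n) (auto simp: fshift_def)

lemma bshift_pow: "(bshift ^^ k) y n = (if k \<le> n then y (n - k) else 0)"
  by (induction k arbitrary: n) (auto simp: bshift_def split: nat.split)

lemma summable_prod_ell2:
  assumes "u \<in> ell2" "v \<in> ell2" shows "summable (\<lambda>n. u n * v n)"
proof (rule summable_comparison_test')
  show "summable (\<lambda>n. (u n)^2 + (v n)^2)" using assms by (intro summable_add) (auto simp: ell2_def)
  fix n
  have "2 * \<bar>u n\<bar> * \<bar>v n\<bar> \<le> \<bar>u n\<bar>^2 + \<bar>v n\<bar>^2" by (rule sum_squares_bound)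
  moreover have "0 \<le> \<bar>u n\<bar> * \<bar>v n\<bar>" by simp
  ultimately show "norm (u n * v n) \<le> (u n)^2 + (v n)^2" unfolding real_norm_def abs_mult power2_abs by linarith
qed

lemma ell2_lin:
  assumes "u \<in> ell2" "v \<in> ell2" shows "(\<lambda>n. u n + c * v n) \<in> ell2"
proof -
  have "summable (\<lambda>n. (u n + c * v n)^2)"
  proof (rule summable_comparison_test')
    show "summable (\<lambda>n. 2 * (u n)^2 + 2 * c^2 * (v n)^2)" using assms
      by (intro summable_add summable_mult) (auto simp: ell2_def)
    fix n
    have "0 \<le> (u n - c * v n)^2" by simp
    then have "(u n + c * v n)^2 \<le> 2 * (u n)^2 + 2 * c^2 * (v n)^2"
      by (simp add: power2_eq_square algebra_simps)
    then show "norm ((u n + c * v n)^2) \<le> 2 * (u n)^2 + 2 * c^2 * (v n)^2"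
      by simp
  qed
  then show ?thesis by (simp add: ell2_def)
qed

lemma ell2_zero[simp]: "(\<lambda>n. 0) \<in> ell2" by (simp add: ell2_def)

lemma ell2_scale: "u \<in> ell2 \<Longrightarrow> (\<lambda>n. c * u n) \<in> ell2"
  using ell2_lin[of "\<lambda>n. 0" u c] by simp

lemma ell2_fpow: "y \<in> ell2 \<Longrightarrow> (fshift ^^ k) y \<in> ell2"
  by (simp add: ell2_def fshift_pow summable_iff_shift[of "\<lambda>m. (y m)^2" k])

lemma ell2_bpow: "y \<in> ell2 \<Longrightarrow> (bshift ^^ k) y \<in> ell2"
proof -
  assume "y \<in> ell2"
  then have "summable (\<lambda>n. ((bshift ^^ k) y (n + k))^2)" by (simp add: ell2_def bshift_pow)
  then show ?thesis unfolding ell2_def by (subst (asm) summable_iff_shift) simp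
qed

lemma ell2_fshift: "y \<in> ell2 \<Longrightarrow> fshift y \<in> ell2"
  using ell2_fpow[of y 1] by simp
lemma ell2_bshift: "y \<in> ell2 \<Longrightarrow> bshift y \<in> ell2"
  using ell2_bpow[of y 1] by simp

lemma polyf_Suc: "polyf a (Suc N) y = (\<lambda>n. polyf a N y n + a N * (fshift ^^ N) y n)"
  by (simp add: polyf_def)
lemma polyb_Suc: "polyb a (Suc N) y = (\<lambda>n. polyb a N y n + a N * (bshift ^^ N) y n)"
  by (simp add: polyb_def)

lemma ell2_polyf: "y \<in> ell2 \<Longrightarrow> polyf a N y \<in> ell2"
  by (induction N) (auto simp: polyf_Suc intro!: ell2_lin ell2_fpow, simp add: polyf_def)
lemma ell2_polyb: "y \<in> ell2 \<Longrightarrow> polyb a N y \<in> ell2"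
  by (induction N) (auto simp: polyb_Suc intro!: ell2_lin ell2_bpow, simp add: polyb_def)

lemma ell2_dlt[simp]: "dlt m \<in> ell2"
proof -
  have "(\<lambda>n. (dlt m n)^2) = (\<lambda>n. if n = m then 1 else 0)" by (auto simp: dlt_def)
  then show ?thesis unfolding ell2_def using summable_single[of m "\<lambda>_. 1::real"] by simp
qed

lemma inner_comm: "ell2_inner x y = ell2_inner y x"
  by (simp add: ell2_inner_def mult.commute)

lemma inner_lin_left:
  assumes "u \<in> ell2" "v \<in> ell2" "y \<in> ell2"
  shows "ell2_inner (\<lambda>n. u n + c * v n) y = ell2_inner u y + c * ell2_inner v y"
proof -
  have s1: "summable (\<lambda>n. u n * y n)" "summable (\<lambda>n. v n * y n)"
    using assms summable_prod_ell2 by auto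
  have "(\<lambda>n. (u n + c * v n) * y n) = (\<lambda>n. u n * y n + c * (v n * y n))"
    by (simp add: algebra_simps)
  then show ?thesis unfolding ell2_inner_def
    using s1 by (simp add: suminf_add[symmetric] summable_mult suminf_mult)
qed

lemma inner_lin_right:
  assumes "u \<in> ell2" "v \<in> ell2" "y \<in> ell2"
  shows "ell2_inner y (\<lambda>n. u n + c * v n) = ell2_inner y u + c * ell2_inner y v"
  using inner_lin_left[OF assms] by (simp add: inner_comm)

lemma inner_zero_left[simp]: "ell2_inner (\<lambda>n. 0) y = 0" by (simp add: ell2_inner_def)
lemma inner_zero_right[simp]: "ell2_inner y (\<lambda>n. 0) = 0" by (simp add: ell2_inner_def)

lemma inner_shift:
  assumes "x \<in> ell2" "y \<in> ell2"
  shows "ell2_inner (fshift x) y = ell2_inner x (bshift y)"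
proof -
  have s: "summable (\<lambda>n. x n * bshift y n)" using assms ell2_bshift summable_prod_ell2 by auto
  have "(\<Sum>n. x (Suc n) * bshift y (Suc n)) = (\<Sum>n. x n * bshift y n) - x 0 * bshift y 0"
    using suminf_split_head[OF s] by simp
  then show ?thesis by (simp add: ell2_inner_def fshift_def bshift_def)
qed

lemma inner_shift_pow:
  assumes "x \<in> ell2" "y \<in> ell2"
  shows "ell2_inner ((fshift ^^ k) x) y = ell2_inner x ((bshift ^^ k) y)"
  using assms
proof (induction k arbitrary: y)
  case 0 then show ?case by simp
next
  case (Suc k)
  have "ell2_inner ((fshift ^^ Suc k) x) y = ell2_inner ((fshift ^^ k) x) (bshift y)"
    using inner_shift[OF ell2_fpow[OF Suc.prems(1)] Suc.prems(2)] by simp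
  also have "\<dots> = ell2_inner x ((bshift ^^ k) (bshift y))"
    using Suc ell2_bshift by auto
  finally show ?case by (simp add: funpow_Suc_right del: funpow.simps)
qed

lemma inner_poly:
  assumes "x \<in> ell2" "y \<in> ell2"
  shows "ell2_inner (polyf a N x) y = ell2_inner x (polyb a N y)"
proof (induction N)
  case 0 then show ?case by (simp add: polyf_def polyb_def)
next
  case (Suc N)
  then show ?case using assms
    by (simp add: polyf_Suc polyb_Suc inner_lin_left inner_lin_right ell2_polyf ell2_polyb
        ell2_fpow ell2_bpow inner_shift_pow)
qed

lemma inner_dlt: "ell2_inner (dlt m) z = z m"
proof -
  have "(\<lambda>n. dlt m n * z n) = (\<lambda>n. if n = m then z n else 0)" by (auto simp: dlt_def)
  then show ?thesis unfolding ell2_inner_def using sums_single[of m z] sums_unique by metis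
qed

lemma adj_eqI:
  assumes "\<forall>y. y \<notin> ell2 \<longrightarrow> S y = (\<lambda>n. 0)" "\<forall>y\<in>ell2. S y \<in> ell2"
    "\<forall>x\<in>ell2. \<forall>y\<in>ell2. ell2_inner (T x) y = ell2_inner x (S y)"
  shows "adj T = S"
  unfolding adj_def
proof (rule the_equality)
  show "(\<forall>y. y \<notin> ell2 \<longrightarrow> S y = (\<lambda>n. 0)) \<and> (\<forall>y\<in>ell2. S y \<in> ell2)
      \<and> (\<forall>x\<in>ell2. \<forall>y\<in>ell2. ell2_inner (T x) y = ell2_inner x (S y))" using assms by blast
  fix S' assume h: "(\<forall>y. y \<notin> ell2 \<longrightarrow> S' y = (\<lambda>n. 0)) \<and> (\<forall>y\<in>ell2. S' y \<in> ell2)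
      \<and> (\<forall>x\<in>ell2. \<forall>y\<in>ell2. ell2_inner (T x) y = ell2_inner x (S' y))"
  show "S' = S"
  proof (rule ext)
    fix y show "S' y = S y"
    proof (cases "y \<in> ell2")
      case True
      show ?thesis
      proof
        fix n
        have "ell2_inner (dlt n) (S' y) = ell2_inner (dlt n) (S y)"
          using h assms True by (metis ell2_dlt)
        then show "S' y n = S y n" by (simp add: inner_dlt)
      qed
    next
      case False then show ?thesis using h assms by auto
    qed
  qed
qed

lemma adj_polyf: "adj (polyf a N) = (\<lambda>y. if y \<in> ell2 then polyb a N y else (\<lambda>n. 0))"
  by (rule adj_eqI) (auto simp: inner_poly ell2_polyb)

lemma adj_polyb: "adj (polyb a N) = (\<lambda>y. if y \<in> ell2 then polyf a N y else (\<lambda>n. 0))"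
  by (rule adj_eqI) (auto simp: inner_poly ell2_polyf ell2_polyb inner_comm[of "polyb a N _"] inner_comm[of _ "polyf a N _"])

lemma in_Rq_polyf: "in_Rq T \<Longrightarrow> \<exists>a N. T = polyf a N"
  by (auto simp: in_Rq_def polyf_def)

lemma mult_if01: "x * (if P then 1 else 0) = (if P then x else (0::real))" by simp

lemma polyf_dlt0: "polyf a N (dlt k) 0 = (if k < N then a k else 0)"
proof -
  have "polyf a N (dlt k) 0 = (\<Sum>j<N. if j = k then a j else 0)"
    by (simp add: polyf_def fshift_pow dlt_def mult_if01)
  then show ?thesis by (simp add: sum.delta')
qed

lemma polyf_zero_coeffs: "(\<forall>k<N. a k = 0) \<Longrightarrow> polyf a N = op_zero"
  by (auto simp: polyf_def op_zero_def fun_eq_iff)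

lemma rq_zero: assumes "in_Rq T" "op_eq T op_zero" shows "T = op_zero"
proof -
  obtain a N where T: "T = polyf a N" using in_Rq_polyf[OF assms(1)] by blast
  have "\<forall>k<N. a k = 0"
  proof (intro allI impI)
    fix k assume "k < N"
    have "T (dlt k) = op_zero (dlt k)" using assms(2) by (simp add: op_eq_def)
    then have "T (dlt k) 0 = 0" by (simp add: op_zero_def)
    then show "a k = 0" using \<open>k < N\<close> by (simp add: T polyf_dlt0)
  qed
  then show ?thesis using T polyf_zero_coeffs by simp
qed

lemma polyf_zero_in: "polyf a N (\<lambda>n. 0) = (\<lambda>n. 0)"
  by (simp add: polyf_def fshift_pow)

lemma rq_zero_in: "in_Rq T \<Longrightarrow> T (\<lambda>n. 0) = (\<lambda>n. 0)"
  using in_Rq_polyf polyf_zero_in by metis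

lemma rq_adj_ell2: "in_Rq T \<Longrightarrow> y \<in> ell2 \<Longrightarrow> adj T y \<in> ell2"
  using in_Rq_polyf adj_polyf ell2_polyb by (metis)

lemma adj_op_zero: "adj op_zero = (\<lambda>y n. 0)"
  by (rule adj_eqI) (auto simp: op_zero_def)

lemma negone_poly: "op_negone = polyf (\<lambda>_. -1) 1" "polyb (\<lambda>_. -1) 1 = op_negone"
  by (auto simp: op_negone_def polyf_def polyb_def fun_eq_iff)

lemma cq_poly: "cq = polyb (\<lambda>k. if k = 1 then 1 / sqrt 2 else 0) 2"
  "polyf (\<lambda>k. if k = 1 then 1 / sqrt 2 else 0) 2 = op_scale (1 / sqrt 2) fshift"
  by (auto simp: cq_def op_scale_def polyf_def polyb_def fun_eq_iff numeral_2_eq_2)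

lemma adj_negone: "adj op_negone = (\<lambda>y. if y \<in> ell2 then op_negone y else (\<lambda>n. 0))"
proof -
  have "adj op_negone = adj (polyf (\<lambda>_. -1) 1)" by (simp only: negone_poly(1))
  also have "\<dots> = (\<lambda>y. if y \<in> ell2 then op_negone y else (\<lambda>n. 0))" by (simp only: adj_polyf negone_poly(2))
  finally show ?thesis .
qed

lemma adj_cq: "adj cq = (\<lambda>y. if y \<in> ell2 then op_scale (1 / sqrt 2) fshift y else (\<lambda>n. 0))"
proof -
  have "adj cq = adj (polyb (\<lambda>k. if k = 1 then 1 / sqrt 2 else 0) 2)" by (simp only: cq_poly(1))
  also have "\<dots> = (\<lambda>y. if y \<in> ell2 then op_scale (1 / sqrt 2) fshift y else (\<lambda>n. 0))" by (simp only: adj_polyb cq_poly(2))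
  finally show ?thesis .
qed

lemma ell2_negone[simp]: "y \<in> ell2 \<Longrightarrow> op_negone y \<in> ell2"
  by (simp add: negone_poly(1) ell2_polyf)
lemma ell2_cq[simp]: "y \<in> ell2 \<Longrightarrow> cq y \<in> ell2"
  by (simp add: cq_poly(1) ell2_polyb)
lemma ell2_opzero[simp]: "op_zero y \<in> ell2"
  by (simp add: op_zero_def)

lemma polyb_dlt: "polyb b M (dlt m) j = (\<Sum>l<M. b l * (if j = m + l then 1 else 0))"
  by (auto simp: polyb_def bshift_pow dlt_def intro!: sum.cong)

lemma core_eval:
  "polyf a N (polyb b M (dlt m)) n = (\<Sum>k<N. \<Sum>l<M. a k * b l * (if n + k = m + l then 1 else 0))"
  by (simp add: polyf_def fshift_pow polyb_dlt sum_distrib_left mult.assoc)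

lemma topbot:
  assumes "t < N" "\<forall>k. t < k \<and> k < N \<longrightarrow> a k = 0" "s < M" "\<forall>l<s. b l = 0"
  shows "polyf a N (polyb b M (dlt t)) s = a t * b s"
proof -
  have eq: "a k * b l * (if s + k = t + l then 1 else 0) = (if k = t then (if l = s then a k * b l else 0) else 0)"
    if "k < N" for k l
  proof -
    show "a k * b l * (if s + k = t + l then 1 else 0) = (if k = t then (if l = s then a k * b l else 0) else 0)"
    proof (cases "s + k = t + l")
      case True
      show ?thesis
      proof (cases "t < k")
        case True then show ?thesis using assms(2) \<open>k < N\<close> by auto
      next
        case False
        show ?thesis
        proof (cases "k = t")
          case True then show ?thesis using \<open>s + k = t + l\<close> by auto
        next
          case False
          then have "l < s" using \<open>\<not> t < k\<close> \<open>s + k = t + l\<close> by linarith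
          then show ?thesis using assms(4) False by auto
        qed
      qed
    qed auto
  qed
  then have "polyf a N (polyb b M (dlt t)) s = (\<Sum>k<N. \<Sum>l<M. (if k = t then (if l = s then a k * b l else 0) else 0))"
    unfolding core_eval by (intro sum.cong refl) (simp add: eq)
  also have "\<dots> = (\<Sum>k<N. if k = t then (\<Sum>l<M. if l = s then a k * b l else 0) else 0)"
    by (intro sum.cong) auto
  also have "\<dots> = a t * b s" using assms(1,3) by simp
  finally show ?thesis .
qed

definition gb :: "nat \<Rightarrow> nat \<Rightarrow> op" where
  "gb r s = (\<lambda>y n. \<Sum>l<5. adj (Mmat l r) (Mmat l s y) n)"

lemma cq_app: "cq y n = (1 / sqrt 2) * bshift y n" by (simp add: cq_def op_scale_def)

lemma ell2_negf[simp]: "y \<in> ell2 \<Longrightarrow> (\<lambda>n. - y n) \<in> ell2"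
  using ell2_negone by (simp add: op_negone_def)
lemma ell2_scb[simp]: "y \<in> ell2 \<Longrightarrow> (\<lambda>n. c * bshift y n) \<in> ell2"
  by (simp add: ell2_scale ell2_bshift)

lemmas gbsimps = gb_def Mmat_def eval_nat_numeral adj_negone adj_cq adj_op_zero op_negone_def
  op_scale_def op_zero_def cq_app fshift_def

lemma gb01: "y \<in> ell2 \<Longrightarrow> gb 0 1 y n = -(1/sqrt 2) * y (Suc n)"
  by (simp add: gbsimps fshift_def)
lemma gb10: "y \<in> ell2 \<Longrightarrow> gb 1 0 y n = -(1/sqrt 2) * bshift y n"
  by (simp add: gbsimps)
lemma gb12: "y \<in> ell2 \<Longrightarrow> gb 1 2 y n = y n / 2"
  by (simp add: gbsimps fshift_def bshift_def)
lemma gb21: "y \<in> ell2 \<Longrightarrow> gb 2 1 y n = y n / 2"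
  by (simp add: gbsimps fshift_def bshift_def)
lemma gb23: "y \<in> ell2 \<Longrightarrow> gb 2 3 y n = -(1/sqrt 2) * bshift y n"
  by (simp add: gbsimps)
lemma gb32: "y \<in> ell2 \<Longrightarrow> gb 3 2 y n = -(1/sqrt 2) * y (Suc n)"
  by (simp add: gbsimps fshift_def)
lemma gb_zero: "y \<in> ell2 \<Longrightarrow> (r, s) \<in> {(0,2),(2,0),(0,3),(3,0),(1,3),(3,1)} \<Longrightarrow> gb r s y n = 0"
  by (auto simp: gbsimps)

lemma less4: "(l::nat) < 4 \<longleftrightarrow> l = 0 \<or> l = 1 \<or> l = 2 \<or> l = 3" by auto
lemma less5: "(l::nat) < 5 \<longleftrightarrow> l = 0 \<or> l = 1 \<or> l = 2 \<or> l = 3 \<or> l = 4" by auto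
lemma sum4: "(\<Sum>l<4. f l) = f 0 + f 1 + f 2 + (f (3::nat) :: real)"
  by (simp add: eval_nat_numeral)

lemma kernel_lt:
  fixes D :: "nat \<Rightarrow> nat \<Rightarrow> real"
  assumes lt: "\<forall>l j. l < 4 \<longrightarrow> j < 4 \<longrightarrow> l < j \<longrightarrow> D l j = 0" and d0: "D 0 0 = 0"
  shows "\<exists>w. (\<forall>l<4. (\<Sum>j<4. D l j * w j) = 0) \<and> (\<exists>i<4. w i \<noteq> 0)"
proof -
  have z1: "D 0 1 = 0" using lt by simp
  have z2: "D 0 2 = 0" using lt by simp
  have z3: "D 0 3 = 0" using lt by simp
  have z4: "D 1 2 = 0" using lt by simp
  have z5: "D 1 3 = 0" by (rule lt[rule_format]) simp_all
  have z6: "D 2 3 = 0" using lt by simp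
  have z7: "D (Suc 0) 2 = 0" "D (Suc 0) 3 = 0" "D 0 (Suc 0) = 0" using z4 z5 z1 by simp_all
  note z = z1 z2 z3 z4 z5 z6 z7
  show ?thesis
  proof (cases "D 3 3 = 0")
    case True
    define W where "W = (\<lambda>j::nat. if j = 3 then 1 else (0::real))"
    show ?thesis
    proof (rule exI[of _ W], intro conjI)
      show "\<forall>l<4. (\<Sum>j<4. D l j * W j) = 0" by (simp add: W_def less4 sum4 z True)
      show "\<exists>i<4. W i \<noteq> 0" by (rule exI[of _ 3]) (simp add: W_def)
    qed
  next
    case d3: False
    show ?thesis
    proof (cases "D 2 2 = 0")
      case True
      define W where "W = (\<lambda>j::nat. if j = 2 then 1 else if j = 3 then - D 3 2 / D 3 3 else 0)"
      show ?thesis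
      proof (rule exI[of _ W], intro conjI)
        show "\<forall>l<4. (\<Sum>j<4. D l j * W j) = 0" by (simp add: W_def less4 sum4 z True d3)
        show "\<exists>i<4. W i \<noteq> 0" by (rule exI[of _ 2]) (simp add: W_def)
      qed
    next
      case d2: False
      show ?thesis
      proof (cases "D 1 1 = 0")
        case True
        define w2 where "w2 = - D 2 1 / D 2 2"
        define w3 where "w3 = - (D 3 1 + D 3 2 * w2) / D 3 3"
        define W where "W = (\<lambda>j::nat. if j = 1 then 1 else if j = 2 then w2 else if j = 3 then w3 else 0)"
        have e2: "D 2 1 + D 2 2 * w2 = 0" using d2 by (simp add: w2_def)
        have e3: "D 3 1 + D 3 2 * w2 + D 3 3 * w3 = 0" using d3 by (simp add: w3_def)
        show ?thesis
        proof (rule exI[of _ W], intro conjI)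
          show "\<forall>l<4. (\<Sum>j<4. D l j * W j) = 0" using e2 e3 True by (simp add: W_def less4 sum4 z)
          show "\<exists>i<4. W i \<noteq> 0" by (rule exI[of _ 1]) (simp add: W_def)
        qed
      next
        case d1: False
        define w1 where "w1 = - D 1 0 / D 1 1"
        define w2 where "w2 = - (D 2 0 + D 2 1 * w1) / D 2 2"
        define w3 where "w3 = - (D 3 0 + D 3 1 * w1 + D 3 2 * w2) / D 3 3"
        define W where "W = (\<lambda>j::nat. if j = 0 then 1 else if j = 1 then w1 else if j = 2 then w2 else if j = 3 then w3 else 0)"
        have e1: "D 1 0 + D 1 1 * w1 = 0" using d1 by (simp add: w1_def)
        have e2: "D 2 0 + D 2 1 * w1 + D 2 2 * w2 = 0" using d2 by (simp add: w2_def)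
        have e3: "D 3 0 + D 3 1 * w1 + D 3 2 * w2 + D 3 3 * w3 = 0" using d3 by (simp add: w3_def)
        show ?thesis
        proof (rule exI[of _ W], intro conjI)
          show "\<forall>l<4. (\<Sum>j<4. D l j * W j) = 0" using e1 e2 e3 d0 by (simp add: W_def less4 sum4 z)
          show "\<exists>i<4. W i \<noteq> 0" by (rule exI[of _ 0]) (simp add: W_def)
        qed
      qed
    qed
  qed
qed

lemma mult_if0: "x * (if P then y else 0) = (if P then x * y else (0::real))" by simp

lemma rq_dlt0: "in_Rq T \<Longrightarrow> T (\<lambda>n. c * dlt 0 n) = (\<lambda>n. c * T (dlt 0) 0 * dlt 0 n)"
proof -
  assume "in_Rq T"
  then obtain a N where T: "T = polyf a N" using in_Rq_polyf by blast
  show ?thesis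
  proof
    fix n
    show "T (\<lambda>n. c * dlt 0 n) n = c * T (dlt 0) 0 * dlt 0 n"
      by (cases n) (auto simp: T polyf_def fshift_pow dlt_def mult_if0 sum.delta)
  qed
qed

lemma bounded_scale: "bounded_op T \<Longrightarrow> x \<in> ell2 \<Longrightarrow> T (\<lambda>n. c * x n) = (\<lambda>n. c * T x n)"
proof -
  assume "bounded_op T" "x \<in> ell2"
  then have "T (\<lambda>n. c * x n + 0 * x n) = (\<lambda>n. c * T x n + 0 * T x n)"
    unfolding bounded_op_def by blast
  then show ?thesis by simp
qed

lemma ell2_cdlt[simp]: "(\<lambda>n. c * dlt m n) \<in> ell2" by (simp add: ell2_scale)

lemma D00:
  assumes inv: "invertible_opmat 4 L" and rq: "\<forall>i<4. \<forall>j<4. in_Rq (L i j)"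
    and lt: "\<forall>l j. l < 4 \<longrightarrow> j < 4 \<longrightarrow> l < j \<longrightarrow> L l j = op_zero"
  shows "L 0 0 (dlt 0) 0 \<noteq> 0"
proof
  assume h: "L 0 0 (dlt 0) 0 = 0"
  obtain K where Kb: "\<forall>i<4. \<forall>j<4. bounded_op (K i j)" and KL: "mat_eq 4 4 (mmul 4 K L) mat_id"
    using inv unfolding invertible_opmat_def by blast
  define D where "D l j = L l j (dlt 0) 0" for l j
  have inj: "w i = 0" if hw: "\<forall>l<4. (\<Sum>j<4. D l j * w j) = 0" and i: "i < 4" for w i
  proof -
    have e: "mat_id i j (\<lambda>n. w j * dlt 0 n) 0 = (if i = j then w i else 0)" for j
      by (simp add: mat_id_def op_one_def op_zero_def dlt_def)
    have "w i = (\<Sum>j<4. mat_id i j (\<lambda>n. w j * dlt 0 n) 0)"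
      using i by (simp only: e sum.delta) simp
    also have "\<dots> = (\<Sum>j<4. mmul 4 K L i j (\<lambda>n. w j * dlt 0 n) 0)"
      using KL i by (intro sum.cong refl) (simp add: mat_eq_def op_eq_def)
    also have "\<dots> = (\<Sum>j<4. \<Sum>l<4. w j * D l j * K i l (dlt 0) 0)"
      unfolding mmul_def using rq Kb i
      by (intro sum.cong refl) (simp add: rq_dlt0 D_def bounded_scale)
    also have "\<dots> = (\<Sum>l<4. (\<Sum>j<4. D l j * w j) * K i l (dlt 0) 0)"
      by (subst sum.swap) (simp add: sum_distrib_right sum_distrib_left mult_ac)
    also have "\<dots> = 0" using hw by simp
    finally show ?thesis .
  qed
  have "\<forall>l j. l < 4 \<longrightarrow> j < 4 \<longrightarrow> l < j \<longrightarrow> D l j = 0"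
    using lt by (simp add: D_def op_zero_def)
  from kernel_lt[OF this] h obtain w where "\<forall>l<4. (\<Sum>j<4. D l j * w j) = 0" "\<exists>i<4. w i \<noteq> 0"
    by (auto simp: D_def)
  then show False using inj by blast
qed

lemma one_ne_zero_op: "op_one \<noteq> op_zero"
proof
  assume "op_one = op_zero"
  then have "op_one (\<lambda>n. 1) 0 = op_zero (\<lambda>n. 1) 0" by simp
  then show False by (simp add: op_one_def op_zero_def)
qed

lemma perm_sigma:
  assumes "perm_opmat 4 P"
  obtains \<sigma> where "\<forall>j<4. \<sigma> j < (4::nat)" "\<forall>j<4. \<forall>r<4. P r j = (if r = \<sigma> j then op_one else op_zero)"
    "\<forall>r<4. \<exists>p<4. \<sigma> p = r" "\<forall>p<4. \<forall>q<4. \<sigma> p = \<sigma> q \<longrightarrow> p = q"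
proof -
  have oz: "\<forall>i<4. \<forall>j<4. P i j = op_one \<or> P i j = op_zero"
    and row: "\<forall>i<4. \<exists>!j. j < 4 \<and> P i j \<noteq> op_zero"
    and col: "\<forall>j<4. \<exists>!i. i < 4 \<and> P i j \<noteq> op_zero" using assms by (auto simp: perm_opmat_def)
  define \<sigma> where "\<sigma> j = (THE i. i < 4 \<and> P i j \<noteq> op_zero)" for j
  have s1: "\<sigma> j < 4 \<and> P (\<sigma> j) j \<noteq> op_zero" if "j < 4" for j
    unfolding \<sigma>_def using theI'[OF col[rule_format, OF that]] by blast
  have s2: "r = \<sigma> j" if "j < 4" "r < 4" "P r j \<noteq> op_zero" for r j
    using col[rule_format, OF that(1)] s1[OF that(1)] that(2,3) by blast
  show ?thesis
  proof (rule that)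
    show "\<forall>j<4. \<sigma> j < 4" using s1 by blast
    show "\<forall>j<4. \<forall>r<4. P r j = (if r = \<sigma> j then op_one else op_zero)"
    proof (intro allI impI)
      fix j r :: nat assume jr: "j < 4" "r < 4"
      show "P r j = (if r = \<sigma> j then op_one else op_zero)"
      proof (cases "r = \<sigma> j")
        case True
        then have "P r j \<noteq> op_zero" using s1[OF jr(1)] by simp
        then show ?thesis using oz jr True by auto
      next
        case False
        then have "P r j = op_zero" using s2[OF jr] by blast
        then show ?thesis using False by simp
      qed
    qed
    show "\<forall>r<4. \<exists>p<4. \<sigma> p = r"
    proof (intro allI impI)
      fix r :: nat assume r: "r < 4"
      obtain p where "p < 4" "P r p \<noteq> op_zero" using row r by blast
      then show "\<exists>p<4. \<sigma> p = r" using s2[of p r] r by blast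
    qed
    show "\<forall>p<4. \<forall>q<4. \<sigma> p = \<sigma> q \<longrightarrow> p = q"
    proof (intro allI impI)
      fix p q :: nat assume h: "p < 4" "q < 4" "\<sigma> p = \<sigma> q"
      have a1: "\<sigma> p < 4" "P (\<sigma> p) p \<noteq> op_zero" using s1 h(1) by auto
      have a2: "P (\<sigma> p) q \<noteq> op_zero" using s1[OF h(2)] h(3) by simp
      show "p = q" using row[rule_format, OF a1(1)] a1(2) a2 h(1,2) by blast
    qed
  qed
qed

lemma Mmat_zero: assumes "l < 5" "r < 4" shows "Mmat l r (\<lambda>n. 0) = (\<lambda>n. 0)"
proof -
  have c: "cq (\<lambda>n. 0) = (\<lambda>n. 0)" by (auto simp: cq_app bshift_def fun_eq_iff split: nat.split)
  have n: "op_negone (\<lambda>n. 0) = (\<lambda>n. 0)" "op_zero (\<lambda>n. 0) = (\<lambda>n. 0)"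
    by (auto simp: op_negone_def op_zero_def)
  show ?thesis using assms unfolding less5 less4
    by (elim disjE) (simp_all add: Mmat_def c n)
qed

lemma mp_entry:
  assumes "\<forall>j<4. \<sigma> j < (4::nat)" "\<forall>j<4. \<forall>r<4. P r j = (if r = \<sigma> j then op_one else op_zero)"
    "l < 5" "j < 4"
  shows "mmul 4 Mmat P l j = Mmat l (\<sigma> j)"
proof (intro ext)
  fix y n
  have "mmul 4 Mmat P l j y n = (\<Sum>r<4. if r = \<sigma> j then Mmat l r y n else 0)"
    unfolding mmul_def using assms Mmat_zero[OF assms(3)]
    by (intro sum.cong refl) (auto simp: op_one_def op_zero_def)
  also have "\<dots> = Mmat l (\<sigma> j) y n" using assms by (simp add: sum.delta')
  finally show "mmul 4 Mmat P l j y n = Mmat l (\<sigma> j) y n" .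
qed

lemma Gp_eq:
  assumes "\<forall>j<4. \<sigma> j < (4::nat)" "\<forall>j<4. \<forall>r<4. P r j = (if r = \<sigma> j then op_one else op_zero)"
    "i < 4" "j < 4"
  shows "mmul 5 (madj (mmul 4 Mmat P)) (mmul 4 Mmat P) i j = gb (\<sigma> i) (\<sigma> j)"
  unfolding mmul_def[of 5] madj_def gb_def
  using mp_entry[OF assms(1,2)] assms(3,4)
  by (intro ext sum.cong refl) simp

lemma term_zero:
  "in_Rq A \<Longrightarrow> in_Rq B \<Longrightarrow> A = op_zero \<or> B = op_zero \<Longrightarrow> A (adj B y) n = 0"
  by (auto simp: op_zero_def adj_op_zero rq_zero_in[unfolded op_zero_def])

lemma case_end:
  assumes "in_Rq A" "in_Rq B" "B (dlt 0) 0 \<noteq> 0"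
    "\<forall>y\<in>ell2. \<forall>n. A (adj B y) n = g y n" "\<forall>y\<in>ell2. g y 0 = 0" "g (dlt 0) 1 \<noteq> 0"
  shows False
proof -
  obtain a N where A: "A = polyf a N" using in_Rq_polyf[OF assms(1)] by blast
  obtain b M where B: "B = polyf b M" using in_Rq_polyf[OF assms(2)] by blast
  have b0: "0 < M" "b 0 \<noteq> 0" using assms(3) by (auto simp: B polyf_dlt0 split: if_splits)
  show False
  proof (cases "\<forall>k<N. a k = 0")
    case True
    then have "A = op_zero" using A polyf_zero_coeffs by simp
    moreover have "A (adj B (dlt 0)) 1 = g (dlt 0) 1" using assms(4) ell2_dlt by blast
    ultimately have "g (dlt 0) 1 = 0" by (simp add: op_zero_def)
    then show False using assms(6) by simp
  next
    case False
    define S where "S = {k. k < N \<and> a k \<noteq> 0}"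
    have fS: "finite S" "S \<noteq> {}" using False by (auto simp: S_def)
    define t where "t = Max S"
    have tS: "t \<in> S" using fS by (simp add: t_def)
    have top: "\<forall>k. t < k \<and> k < N \<longrightarrow> a k = 0"
    proof (intro allI impI)
      fix k assume k: "t < k \<and> k < N"
      show "a k = 0"
      proof (rule ccontr)
        assume "a k \<noteq> 0"
        then have "k \<in> S" using k by (simp add: S_def)
        then have "k \<le> t" using Max_ge[OF fS(1)] t_def by simp
        then show False using k by simp
      qed
    qed
    have "polyf a N (polyb b M (dlt t)) 0 = a t * b 0"
      using topbot[of t N a 0 M b] tS top b0 by (simp add: S_def)
    moreover have "A (adj B (dlt t)) 0 = polyf a N (polyb b M (dlt t)) 0"
      by (simp add: A B adj_polyf)
    moreover have "A (adj B (dlt t)) 0 = g (dlt t) 0" using assms(4) ell2_dlt by blast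
    ultimately have "g (dlt t) 0 = a t * b 0" by simp
    then show False using assms(5) tS b0 by (simp add: S_def)
  qed
qed

lemma case_mid:
  assumes "in_Rq A" "in_Rq B" "in_Rq C"
    "\<forall>y\<in>ell2. \<forall>n. A (adj C y) n = g1 y n" "y1 \<in> ell2" "g1 y1 n1 \<noteq> 0"
    "\<forall>y\<in>ell2. \<forall>n. B (adj C y) n = g2 y n" "y2 \<in> ell2" "g2 y2 n2 \<noteq> 0"
    "\<forall>y\<in>ell2. \<forall>n. A (adj B y) n = 0"
  shows False
proof -
  obtain a N where A: "A = polyf a N" using in_Rq_polyf[OF assms(1)] by blast
  obtain b M where B: "B = polyf b M" using in_Rq_polyf[OF assms(2)] by blast
  have an: "\<not> (\<forall>k<N. a k = 0)"
  proof
    assume "\<forall>k<N. a k = 0"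
    then have "A = op_zero" using A polyf_zero_coeffs by simp
    then show False using assms(4-6) by (simp add: op_zero_def)
  qed
  have bn: "\<not> (\<forall>k<M. b k = 0)"
  proof
    assume "\<forall>k<M. b k = 0"
    then have "B = op_zero" using B polyf_zero_coeffs by simp
    then show False using assms(7-9) by (simp add: op_zero_def)
  qed
  define S where "S = {k. k < N \<and> a k \<noteq> 0}"
  have fS: "finite S" "S \<noteq> {}" using an by (auto simp: S_def)
  define t where "t = Max S"
  have tS: "t \<in> S" using fS by (simp add: t_def)
  have top: "\<forall>k. t < k \<and> k < N \<longrightarrow> a k = 0"
  proof (intro allI impI)
    fix k assume k: "t < k \<and> k < N"
    show "a k = 0"
    proof (rule ccontr)
      assume "a k \<noteq> 0"
      then have "k \<in> S" using k by (simp add: S_def)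
      then have "k \<le> t" using Max_ge[OF fS(1)] t_def by simp
      then show False using k by simp
    qed
  qed
  define R where "R = {k. k < M \<and> b k \<noteq> 0}"
  have fR: "finite R" "R \<noteq> {}" using bn by (auto simp: R_def)
  define s where "s = Min R"
  have sR: "s \<in> R" using fR by (simp add: s_def)
  have bot: "\<forall>l<s. b l = 0"
  proof (intro allI impI)
    fix l assume "l < s"
    show "b l = 0"
    proof (rule ccontr)
      assume "b l \<noteq> 0"
      then have "l \<in> R" using \<open>l < s\<close> sR by (auto simp: R_def)
      then have "s \<le> l" using Min_le[OF fR(1)] s_def by simp
      then show False using \<open>l < s\<close> by simp
    qed
  qed
  have "polyf a N (polyb b M (dlt t)) s = a t * b s"
    using topbot[of t N a s M b] tS top sR bot by (simp add: S_def R_def)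
  moreover have "A (adj B (dlt t)) s = polyf a N (polyb b M (dlt t)) s"
    by (simp add: A B adj_polyf)
  moreover have "A (adj B (dlt t)) s = 0" using assms(10) ell2_dlt by blast
  ultimately have "a t * b s = 0" by simp
  then show False using tS sR by (simp add: S_def R_def)
qed

theorem theorem3:
  fixes P :: opmat
  assumes "perm_opmat 4 P"
  shows "\<not> (\<exists>L :: opmat.
            invertible_opmat 4 L
          \<and> (\<forall>i<4. \<forall>j<4. in_Rq (L i j))
          \<and> mat_eq 4 4 (mmul 4 L (madj L)) (mmul 5 (madj (mmul 4 Mmat P)) (mmul 4 Mmat P))
          \<and> lower_tri 4 L
          \<and> (\<forall>i<4. \<forall>j<4. op_eq (mmul 5 (madj (mmul 4 Mmat P)) (mmul 4 Mmat P) i j) op_zero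
                \<longrightarrow> op_eq (L i j) op_zero))"
proof
  assume "\<exists>L :: opmat.
            invertible_opmat 4 L
          \<and> (\<forall>i<4. \<forall>j<4. in_Rq (L i j))
          \<and> mat_eq 4 4 (mmul 4 L (madj L)) (mmul 5 (madj (mmul 4 Mmat P)) (mmul 4 Mmat P))
          \<and> lower_tri 4 L
          \<and> (\<forall>i<4. \<forall>j<4. op_eq (mmul 5 (madj (mmul 4 Mmat P)) (mmul 4 Mmat P) i j) op_zero
                \<longrightarrow> op_eq (L i j) op_zero)"
  then obtain L :: opmat where inv: "invertible_opmat 4 L" and rq: "\<forall>i<4. \<forall>j<4. in_Rq (L i j)"
    and LL: "mat_eq 4 4 (mmul 4 L (madj L)) (mmul 5 (madj (mmul 4 Mmat P)) (mmul 4 Mmat P))"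
    and lt: "lower_tri 4 L"
    and sp: "\<forall>i<4. \<forall>j<4. op_eq (mmul 5 (madj (mmul 4 Mmat P)) (mmul 4 Mmat P) i j) op_zero
                \<longrightarrow> op_eq (L i j) op_zero" by blast
  obtain \<sigma> where s1: "\<forall>j<4. \<sigma> j < (4::nat)"
    and s2: "\<forall>j<4. \<forall>r<4. P r j = (if r = \<sigma> j then op_one else op_zero)"
    and sur: "\<forall>r<4. \<exists>p<4. \<sigma> p = r" and inj: "\<forall>p<4. \<forall>q<4. \<sigma> p = \<sigma> q \<longrightarrow> p = q"
    using perm_sigma[OF assms] by blast
  note Gp = Gp_eq[OF s1 s2]
  have LLg: "(\<Sum>l<4. L i l (adj (L j l) y) n) = gb (\<sigma> i) (\<sigma> j) y n"
    if "i < 4" "j < 4" "y \<in> ell2" for i j y n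
  proof -
    have "mmul 4 L (madj L) i j y = mmul 5 (madj (mmul 4 Mmat P)) (mmul 4 Mmat P) i j y"
      using LL that by (simp add: mat_eq_def op_eq_def)
    then have h: "mmul 4 L (madj L) i j y n = gb (\<sigma> i) (\<sigma> j) y n"
      using Gp[OF that(1,2)] by simp
    show ?thesis using h unfolding mmul_def[of 4] madj_def by simp
  qed
  have spz: "L i j = op_zero" if "i < 4" "j < 4" "\<forall>y\<in>ell2. \<forall>n. gb (\<sigma> i) (\<sigma> j) y n = 0" for i j
  proof -
    have "op_eq (mmul 5 (madj (mmul 4 Mmat P)) (mmul 4 Mmat P) i j) op_zero"
      using that Gp[OF that(1,2)] by (simp add: op_eq_def op_zero_def fun_eq_iff)
    then have "op_eq (L i j) op_zero" using sp that by blast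
    then show ?thesis using rq_zero rq that by blast
  qed
  have lt0: "\<forall>l j. l < 4 \<longrightarrow> j < 4 \<longrightarrow> l < j \<longrightarrow> L l j = op_zero"
    using lt rq rq_zero unfolding lower_tri_def by blast
  have D: "L 0 0 (dlt 0) 0 \<noteq> 0" using D00[OF inv rq lt0] .
  have red: "L i 0 (adj (L j 0) y) n = gb (\<sigma> i) (\<sigma> j) y n"
    if "i < 4" "j < 4" "y \<in> ell2" "\<forall>l. 0 < l \<and> l < 4 \<longrightarrow> L i l = op_zero \<or> L j l = op_zero" for i j y n
  proof -
    have z: "L i l (adj (L j l) y) n = 0" if "0 < l" "l < 4" for l
      using term_zero[of "L i l" "L j l"] rq \<open>i < 4\<close> \<open>j < 4\<close> that
        \<open>\<forall>l. 0 < l \<and> l < 4 \<longrightarrow> L i l = op_zero \<or> L j l = op_zero\<close> by blast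
    have "(\<Sum>l<4. L i l (adj (L j l) y) n) = L i 0 (adj (L j 0) y) n"
      unfolding sum4 using z[of 1] z[of 2] z[of 3] by simp
    then show ?thesis using LLg[OF that(1-3)] by simp
  qed
  have col0: "\<forall>y\<in>ell2. \<forall>n. L i 0 (adj (L 0 0) y) n = gb (\<sigma> i) (\<sigma> 0) y n" if "i < 4" for i
    using red[OF that, of 0] lt0 by simp
  have gbz: "\<forall>y\<in>ell2. \<forall>n. gb r s y n = 0" if "(r, s) \<in> {(0,2),(2,0),(0,3),(3,0),(1,3),(3,1)}" for r s
    by (intro ballI allI gb_zero[OF _ that])
  have inj0: "\<sigma> l \<noteq> \<sigma> 0" if "0 < l" "l < 4" for l
  proof
    assume "\<sigma> l = \<sigma> 0"
    then have "l = 0" using inj[rule_format, of l 0] that(2) by simp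
    then show False using that(1) by simp
  qed
  have rq00: "in_Rq (L 0 0)" using rq by simp
  have "\<sigma> 0 < 4" using s1 by simp
  then consider "\<sigma> 0 = 0" | "\<sigma> 0 = 1" | "\<sigma> 0 = 2" | "\<sigma> 0 = 3" by (auto simp: less4)
  then show False
  proof cases
    case 1
    obtain p where p: "p < 4" "\<sigma> p = 1" using sur[rule_format, of 1] by auto
    show False
    proof (rule case_end[of "L p 0" "L 0 0" "gb 1 0"])
      show "in_Rq (L p 0)" using rq p by simp
      show "in_Rq (L 0 0)" using rq by simp
      show "L 0 0 (dlt 0) 0 \<noteq> 0" by (rule D)
      show "\<forall>y\<in>ell2. \<forall>n. L p 0 (adj (L 0 0) y) n = gb 1 0 y n" using col0[OF p(1)] p(2) 1 by simp
      show "\<forall>y\<in>ell2. gb 1 0 y 0 = 0" by (simp add: gb10 gb10[simplified] bshift_def)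
      show "gb 1 0 (dlt 0) 1 \<noteq> 0" by (subst gb10[OF ell2_dlt]) (simp_all add: bshift_def dlt_def)
    qed
  next
    case 4
    obtain p where p: "p < 4" "\<sigma> p = 2" using sur[rule_format, of 2] by auto
    show False
    proof (rule case_end[of "L p 0" "L 0 0" "gb 2 3"])
      show "in_Rq (L p 0)" using rq p by simp
      show "in_Rq (L 0 0)" using rq by simp
      show "L 0 0 (dlt 0) 0 \<noteq> 0" by (rule D)
      show "\<forall>y\<in>ell2. \<forall>n. L p 0 (adj (L 0 0) y) n = gb 2 3 y n" using col0[OF p(1)] p(2) 4 by simp
      show "\<forall>y\<in>ell2. gb 2 3 y 0 = 0" by (simp add: gb23 gb23[simplified] bshift_def)
      show "gb 2 3 (dlt 0) 1 \<noteq> 0" by (subst gb23[OF ell2_dlt]) (simp_all add: bshift_def dlt_def)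
    qed
  next
    case 2
    obtain u where u: "u < 4" "\<sigma> u = 0" using sur[rule_format, of 0] by auto
    obtain w where w: "w < 4" "\<sigma> w = 2" using sur[rule_format, of 2] by auto
    have van: "\<forall>l. 0 < l \<and> l < 4 \<longrightarrow> L u l = op_zero \<or> L w l = op_zero"
    proof (intro allI impI)
      fix l :: nat assume l: "0 < l \<and> l < 4"
      have "\<sigma> l < 4" "\<sigma> l \<noteq> 1" using s1 l inj0[of l] 2 by auto
      then consider "\<sigma> l = 0" | "\<sigma> l = 2" | "\<sigma> l = 3" by (auto simp: less4)
      then show "L u l = op_zero \<or> L w l = op_zero"
      proof cases
        case 1 then show ?thesis using spz[of w l] w l gbz[of 2 0] by auto
      next
        case 2 then show ?thesis using spz[of u l] u l gbz[of 0 2] by auto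
      next
        case 3 then show ?thesis using spz[of u l] u l gbz[of 0 3] by auto
      qed
    qed
    show False
    proof (rule case_mid[of "L u 0" "L w 0" "L 0 0" "gb 0 1" "dlt 1" 0 "gb 2 1" "dlt 0" 0])
      show "in_Rq (L u 0)" using rq u by simp
      show "in_Rq (L w 0)" using rq w by simp
      show "in_Rq (L 0 0)" using rq by simp
      show "\<forall>y\<in>ell2. \<forall>n. L u 0 (adj (L 0 0) y) n = gb 0 1 y n" using col0[OF u(1)] u(2) 2 by simp
      show "\<forall>y\<in>ell2. \<forall>n. L w 0 (adj (L 0 0) y) n = gb 2 1 y n" using col0[OF w(1)] w(2) 2 by simp
      show "dlt 1 \<in> ell2" "dlt 0 \<in> ell2" by simp_all
      show "gb 0 1 (dlt 1) 0 \<noteq> 0" by (subst gb01[OF ell2_dlt]) (simp_all add: bshift_def dlt_def)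
      show "gb 2 1 (dlt 0) 0 \<noteq> 0" by (subst gb21[OF ell2_dlt]) (simp_all add: bshift_def dlt_def)
      show "\<forall>y\<in>ell2. \<forall>n. L u 0 (adj (L w 0) y) n = 0"
        using red[OF u(1) w(1) _ van] u(2) w(2) gbz[of 0 2] by simp
    qed
  next
    case 3
    obtain u where u: "u < 4" "\<sigma> u = 1" using sur[rule_format, of 1] by auto
    obtain w where w: "w < 4" "\<sigma> w = 3" using sur[rule_format, of 3] by auto
    have van: "\<forall>l. 0 < l \<and> l < 4 \<longrightarrow> L u l = op_zero \<or> L w l = op_zero"
    proof (intro allI impI)
      fix l :: nat assume l: "0 < l \<and> l < 4"
      have "\<sigma> l < 4" "\<sigma> l \<noteq> 2" using s1 l inj0[of l] 3 by auto
      then consider "\<sigma> l = 0" | "\<sigma> l = 1" | "\<sigma> l = 3" by (auto simp: less4)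
      then show "L u l = op_zero \<or> L w l = op_zero"
      proof cases
        case 1 then show ?thesis using spz[of w l] w l gbz[of 3 0] by auto
      next
        case 2 then show ?thesis using spz[of w l] w l gbz[of 3 1] by auto
      next
        case 3 then show ?thesis using spz[of u l] u l gbz[of 1 3] by auto
      qed
    qed
    show False
    proof (rule case_mid[of "L u 0" "L w 0" "L 0 0" "gb 1 2" "dlt 0" 0 "gb 3 2" "dlt 1" 0])
      show "in_Rq (L u 0)" using rq u by simp
      show "in_Rq (L w 0)" using rq w by simp
      show "in_Rq (L 0 0)" using rq by simp
      show "\<forall>y\<in>ell2. \<forall>n. L u 0 (adj (L 0 0) y) n = gb 1 2 y n" using col0[OF u(1)] u(2) 3 by simp
      show "\<forall>y\<in>ell2. \<forall>n. L w 0 (adj (L 0 0) y) n = gb 3 2 y n" using col0[OF w(1)] w(2) 3 by simp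
      show "dlt 0 \<in> ell2" "dlt 1 \<in> ell2" by simp_all
      show "gb 1 2 (dlt 0) 0 \<noteq> 0" by (subst gb12[OF ell2_dlt]) (simp_all add: bshift_def dlt_def)
      show "gb 3 2 (dlt 1) 0 \<noteq> 0" by (subst gb32[OF ell2_dlt]) (simp_all add: bshift_def dlt_def)
      show "\<forall>y\<in>ell2. \<forall>n. L u 0 (adj (L w 0) y) n = 0"
        using red[OF u(1) w(1) _ van] u(2) w(2) gbz[of 1 3] by simp
    qed
  qed
qed

end
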